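(* Let $G$ be a connected graph in $\mathcal{C}$ and $C$ an induced $C_5$ in $G$ with vertices $0,\dots,4$ in cyclic order. If $R\neq\emptyset$, then $|X_i|\le 2$ for every $i$.
   Context: $\mathcal{C}=\mathrm{Free}(\text{claw}, 4K_1, \text{5-wheel}, C_5\text{-twin}, P_5\text{-twin}, K_5-e)$, where $\mathrm{Free}(L)$ is the class of graphs with no induced subgraph isomorphic to a member of $L$; the claw is $K_{1,3}$; $4K_1$ is the edgeless graph on 4 vertices; the 5-wheel is $C_5$ plus a vertex adjacent to all five cycle vertices; the $C_5$-twin is $C_5$ plus a new vertex adjacent to one cycle vertex $v$ and both cycle-neighbours of $v$; the $P_5$-twin is a path $p_1p_2p_3p_4p_5$ plus a new vertex adjacent to exactly $p_2,p_3,p_4$; $K_5-e$ is $K_5$ minus one edge. Given an induced cycle $C$ of length 5 with vertices $0,\dots,4$ in cyclic order (indices taken mod 5): $R$ is the set of vertices outside $C$ with no neighbour in $C$; $X_j$ is the set of vertices outside $C$ whose neighbourhood in $C$ is exactly $\{j,j+1\}$; $Y_j$ is the set of vertices outside $C$ whose neighbourhood in $C$ is exactly $\{j,j+1,j+2,j+3\}$; $X=\bigcup_j X_j$, $Y=\bigcup_j Y_j$. *)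

theory Defs
  imports Main
begin

definition graph :: "'a set \<Rightarrow> ('a \<Rightarrow> 'a \<Rightarrow> bool) \<Rightarrow> bool" where
  "graph V E \<longleftrightarrow> finite V \<and> (\<forall>u v. E u v \<longrightarrow> u \<in> V \<and> v \<in> V)
     \<and> (\<forall>u v. E u v \<longrightarrow> E v u) \<and> (\<forall>v. \<not> E v v)"

definition connected_graph :: "'a set \<Rightarrow> ('a \<Rightarrow> 'a \<Rightarrow> bool) \<Rightarrow> bool" where
  "connected_graph V E \<longleftrightarrow> (\<forall>u\<in>V. \<forall>v\<in>V. (\<lambda>x y. x \<in> V \<and> y \<in> V \<and> E x y)\<^sup>*\<^sup>* u v)"

definition has_induced :: "'a set \<Rightarrow> ('a \<Rightarrow> 'a \<Rightarrow> bool) \<Rightarrow> nat \<Rightarrow> (nat \<Rightarrow> nat \<Rightarrow> bool) \<Rightarrow> bool" where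
  "has_induced V E n H \<longleftrightarrow> (\<exists>f. inj_on f {..<n} \<and> f ` {..<n} \<subseteq> V \<and>
      (\<forall>i<n. \<forall>j<n. E (f i) (f j) \<longleftrightarrow> H i j))"

definition cyc5 :: "nat \<Rightarrow> nat \<Rightarrow> bool" where
  "cyc5 i j \<longleftrightarrow> i < 5 \<and> j < 5 \<and> (j = (i + 1) mod 5 \<or> i = (j + 1) mod 5)"

definition claw :: "nat \<Rightarrow> nat \<Rightarrow> bool" where
  "claw i j \<longleftrightarrow> i \<noteq> j \<and> (i = 0 \<or> j = 0)"

definition fourK1 :: "nat \<Rightarrow> nat \<Rightarrow> bool" where
  "fourK1 i j \<longleftrightarrow> False"

definition wheel5 :: "nat \<Rightarrow> nat \<Rightarrow> bool" where
  "wheel5 i j \<longleftrightarrow> cyc5 i j \<or> (i = 5 \<and> j < 5) \<or> (j = 5 \<and> i < 5)"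

definition c5twin :: "nat \<Rightarrow> nat \<Rightarrow> bool" where
  "c5twin i j \<longleftrightarrow> cyc5 i j \<or> (i = 5 \<and> j \<in> {0,1,4}) \<or> (j = 5 \<and> i \<in> {0,1,4})"

definition p5twin :: "nat \<Rightarrow> nat \<Rightarrow> bool" where
  "p5twin i j \<longleftrightarrow> (i < 5 \<and> j < 5 \<and> (j = i + 1 \<or> i = j + 1))
     \<or> (i = 5 \<and> j \<in> {1,2,3}) \<or> (j = 5 \<and> i \<in> {1,2,3})"

definition k5e :: "nat \<Rightarrow> nat \<Rightarrow> bool" where
  "k5e i j \<longleftrightarrow> i \<noteq> j \<and> {i,j} \<noteq> {0,1}"

definition in_class_C :: "'a set \<Rightarrow> ('a \<Rightarrow> 'a \<Rightarrow> bool) \<Rightarrow> bool" where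
  "in_class_C V E \<longleftrightarrow> \<not> has_induced V E 4 claw \<and> \<not> has_induced V E 4 fourK1
     \<and> \<not> has_induced V E 6 wheel5 \<and> \<not> has_induced V E 6 c5twin
     \<and> \<not> has_induced V E 6 p5twin \<and> \<not> has_induced V E 5 k5e"

definition induced_C5 :: "'a set \<Rightarrow> ('a \<Rightarrow> 'a \<Rightarrow> bool) \<Rightarrow> (nat \<Rightarrow> 'a) \<Rightarrow> bool" where
  "induced_C5 V E c \<longleftrightarrow> inj_on c {..<5} \<and> c ` {..<5} \<subseteq> V \<and>
      (\<forall>i<5. \<forall>j<5. E (c i) (c j) \<longleftrightarrow> cyc5 i j)"

definition nbrC :: "('a \<Rightarrow> 'a \<Rightarrow> bool) \<Rightarrow> (nat \<Rightarrow> 'a) \<Rightarrow> 'a \<Rightarrow> nat set" where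
  "nbrC E c v = {i. i < 5 \<and> E v (c i)}"

definition Rset :: "'a set \<Rightarrow> ('a \<Rightarrow> 'a \<Rightarrow> bool) \<Rightarrow> (nat \<Rightarrow> 'a) \<Rightarrow> 'a set" where
  "Rset V E c = {v \<in> V - c ` {..<5}. nbrC E c v = {}}"

definition Xset :: "'a set \<Rightarrow> ('a \<Rightarrow> 'a \<Rightarrow> bool) \<Rightarrow> (nat \<Rightarrow> 'a) \<Rightarrow> nat \<Rightarrow> 'a set" where
  "Xset V E c j = {v \<in> V - c ` {..<5}. nbrC E c v = {j mod 5, (j + 1) mod 5}}"

end

theory Submission
  imports Defs
begin

lemma less4_cases: "(k::nat) < 4 \<longleftrightarrow> k = 0 \<or> k = 1 \<or> k = 2 \<or> k = 3" by auto
lemma less5_cases: "(k::nat) < 5 \<longleftrightarrow> k = 0 \<or> k = 1 \<or> k = 2 \<or> k = 3 \<or> k = 4" by auto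

lemma no_claw:
  assumes G: "graph V E" and C: "in_class_C V E"
    and V: "x \<in> V" "y \<in> V" "z \<in> V" "w \<in> V"
    and d: "y \<noteq> z" "y \<noteq> w" "z \<noteq> w"
    and e: "E x y" "E x z" "E x w" "\<not> E y z" "\<not> E y w" "\<not> E z w"
  shows False
proof -
  have sym: "\<And>u v. E u v \<Longrightarrow> E v u" and irr: "\<And>v. \<not> E v v" using G unfolding graph_def by auto
  define f where "f = (\<lambda>k::nat. if k = 0 then x else if k = 1 then y else if k = 2 then z else w)"
  have ne: "x \<noteq> y" "x \<noteq> z" "x \<noteq> w" using e irr by metis+
  have "has_induced V E 4 claw"
    unfolding has_induced_def
  proof (intro exI conjI)
    show "inj_on f {..<4}" unfolding inj_on_def f_def using ne d
      by (auto simp: less4_cases)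
    show "f ` {..<4} \<subseteq> V" using V by (auto simp: f_def)
    show "\<forall>i<4. \<forall>j<4. E (f i) (f j) = claw i j"
      unfolding less4_cases f_def claw_def using e sym[OF e(1)] sym[OF e(2)] sym[OF e(3)] irr
        by (auto dest: sym)
  qed
  thus False using C unfolding in_class_C_def by auto
qed

lemma no_4K1:
  assumes G: "graph V E" and C: "in_class_C V E"
    and V: "x \<in> V" "y \<in> V" "z \<in> V" "w \<in> V"
    and d: "x \<noteq> y" "x \<noteq> z" "x \<noteq> w" "y \<noteq> z" "y \<noteq> w" "z \<noteq> w"
    and e: "\<not> E x y" "\<not> E x z" "\<not> E x w" "\<not> E y z" "\<not> E y w" "\<not> E z w"
  shows False
proof -
  have sym: "\<And>u v. E u v \<Longrightarrow> E v u" and irr: "\<And>v. \<not> E v v" using G unfolding graph_def by auto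
  define f where "f = (\<lambda>k::nat. if k = 0 then x else if k = 1 then y else if k = 2 then z else w)"
  have "has_induced V E 4 fourK1"
    unfolding has_induced_def
  proof (intro exI conjI)
    show "inj_on f {..<4}" unfolding inj_on_def f_def using d
      by (auto simp: less4_cases)
    show "f ` {..<4} \<subseteq> V" using V by (auto simp: f_def)
    show "\<forall>i<4. \<forall>j<4. E (f i) (f j) = fourK1 i j"
      unfolding less4_cases f_def fourK1_def using e irr by (auto dest: sym)
  qed
  thus False using C unfolding in_class_C_def by auto
qed

lemma no_k5e:
  assumes G: "graph V E" and C: "in_class_C V E"
    and V: "r \<in> V" "u \<in> V" "a \<in> V" "b \<in> V" "d \<in> V"
    and e: "\<not> E r u" "E r a" "E r b" "E r d" "E u a" "E u b" "E u d"
           "E a b" "E a d" "E b d"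
    and ru: "r \<noteq> u"
  shows False
proof -
  have sym: "\<And>u v. E u v \<Longrightarrow> E v u" and irr: "\<And>v. \<not> E v v" using G unfolding graph_def by auto
  have ne: "r \<noteq> a" "r \<noteq> b" "r \<noteq> d" "u \<noteq> a" "u \<noteq> b" "u \<noteq> d" "a \<noteq> b" "a \<noteq> d" "b \<noteq> d"
    using e irr by metis+
  define f where "f = (\<lambda>k::nat. if k = 0 then r else if k = 1 then u else if k = 2 then a else if k = 3 then b else d)"
  have "has_induced V E 5 k5e"
    unfolding has_induced_def
  proof (intro exI conjI)
    show "inj_on f {..<5}" unfolding inj_on_def f_def using ne ru
      by (auto simp: less5_cases)
    show "f ` {..<5} \<subseteq> V" using V by (auto simp: f_def)
    show "\<forall>i<5. \<forall>j<5. E (f i) (f j) = k5e i j"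
      unfolding less5_cases f_def k5e_def doubleton_eq_iff using e irr
        sym[OF e(2)] sym[OF e(3)] sym[OF e(4)] sym[OF e(5)] sym[OF e(6)] sym[OF e(7)] sym[OF e(8)] sym[OF e(9)] sym[OF e(10)]
        by (auto dest: sym)
  qed
  thus False using C unfolding in_class_C_def by auto
qed


lemma c1: "(i::nat) < 5 \<Longrightarrow> cyc5 i ((i+4) mod 5)"
  unfolding cyc5_def by (cases "i=0"; cases "i=1"; cases "i=2"; cases "i=3"; cases "i=4"; simp)
lemma c2: "(i::nat) < 5 \<Longrightarrow> \<not> cyc5 ((i+2) mod 5) ((i+4) mod 5)"
  unfolding cyc5_def by (cases "i=0"; cases "i=1"; cases "i=2"; cases "i=3"; cases "i=4"; simp)

lemma three_elems:
  assumes "\<not> card A \<le> 2"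
  obtains a b d where "a \<in> A" "b \<in> A" "d \<in> A" "a \<noteq> b" "a \<noteq> d" "b \<noteq> d"
proof -
  have "finite A" using assms card.infinite by force
  have "3 \<le> card A" using assms by simp
  then obtain B where "B \<subseteq> A" "card B = 3" by (meson obtain_subset_with_card_n)
  then show ?thesis using that by (auto simp: card_3_iff)
qed

theorem claim14:
  fixes V :: "'a set" and E :: "'a \<Rightarrow> 'a \<Rightarrow> bool" and c :: "nat \<Rightarrow> 'a"
  assumes "graph V E" and "connected_graph V E" and "in_class_C V E"
    and "induced_C5 V E c"
    and "Rset V E c \<noteq> {}"
  shows "\<forall>i<5. card (Xset V E c i) \<le> 2"
proof (intro allI impI, rule ccontr)
  fix i :: nat assume i5: "i < 5" and nc: "\<not> card (Xset V E c i) \<le> 2"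
  note G = assms(1) and CC = assms(3)
  have sym: "\<And>u v. E u v \<Longrightarrow> E v u" using G unfolding graph_def by auto
  obtain a b d where ab: "a \<in> Xset V E c i" "b \<in> Xset V E c i" "d \<in> Xset V E c i"
    "a \<noteq> b" "a \<noteq> d" "b \<noteq> d" using three_elems[OF nc] by blast
  obtain r where r: "r \<in> Rset V E c" using assms(5) by blast
  define q where "q = (i+1) mod 5"
  define m where "m = (i+4) mod 5"
  define s where "s = (i+2) mod 5"
  have im: "i mod 5 = i" using i5 by simp
  have i5c: "i = 0 \<or> i = 1 \<or> i = 2 \<or> i = 3 \<or> i = 4" using i5 by auto
  have idx: "i < 5" "q < 5" "m < 5" "s < 5" "m \<noteq> i" "m \<noteq> q" "s \<noteq> i" "s \<noteq> q" "s \<noteq> m"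
    unfolding q_def m_def s_def using i5 by presburger+
  have cyc: "cyc5 i m" "\<not> cyc5 s m" unfolding m_def s_def using c1[OF i5] c2[OF i5] by auto
  have ind: "inj_on c {..<5}" "c ` {..<5} \<subseteq> V" "\<forall>i<5. \<forall>j<5. E (c i) (c j) \<longleftrightarrow> cyc5 i j"
    using assms(4) unfolding induced_C5_def by auto
  have Eim: "E (c i) (c m)" using ind(3) cyc idx by auto
  have Esm: "\<not> E (c s) (c m)" using ind(3) cyc idx by auto
  have csm: "c s \<noteq> c m" "c i \<noteq> c m" using ind(1) idx unfolding inj_on_def by auto
  have cV: "c i \<in> V" "c m \<in> V" "c s \<in> V" using ind(2) idx by auto
  have Xp: "x \<in> V \<and> (\<forall>k<5. x \<noteq> c k) \<and> E x (c i) \<and> \<not> E x (c m) \<and> \<not> E x (c s)"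
    if "x \<in> Xset V E c i" for x
  proof -
    have n: "nbrC E c x = {i, q}" using that im unfolding Xset_def q_def by auto
    have "i \<in> nbrC E c x" "m \<notin> nbrC E c x" "s \<notin> nbrC E c x" using n idx by auto
    then show ?thesis using that idx unfolding nbrC_def Xset_def by auto
  qed
  have Rp: "r \<in> V \<and> (\<forall>k<5. r \<noteq> c k) \<and> (\<forall>k<5. \<not> E r (c k))"
    using r unfolding Rset_def nbrC_def by auto
  have clq: "E x y" if "x \<in> Xset V E c i" "y \<in> Xset V E c i" "x \<noteq> y" for x y
  proof (rule ccontr)
    assume "\<not> E x y"
    have "c m \<noteq> x" "c m \<noteq> y" using Xp[OF that(1)] Xp[OF that(2)] idx by metis+
    moreover have "\<not> E (c m) x" "\<not> E (c m) y" using Xp[OF that(1)] Xp[OF that(2)] sym by blast+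
    moreover have "E (c i) x" "E (c i) y" using Xp[OF that(1)] Xp[OF that(2)] sym by blast+
    ultimately show False using no_claw[OF G CC, of "c i" "c m" x y] cV Xp[OF that(1)] Xp[OF that(2)]
      \<open>\<not> E x y\<close> that(3) Eim by blast
  qed
  have rx: "E r x" if "x \<in> Xset V E c i" for x
  proof (rule ccontr)
    assume "\<not> E r x"
    have "r \<noteq> x" using Xp[OF that] Rp idx by blast
    moreover have "r \<noteq> c s" "r \<noteq> c m" "x \<noteq> c s" "x \<noteq> c m" using Xp[OF that] Rp idx by blast+
    moreover have "\<not> E r (c s)" "\<not> E r (c m)" using Rp idx by blast+
    ultimately show False using no_4K1[OF G CC, of r x "c s" "c m"] cV Xp[OF that] Rp
      \<open>\<not> E r x\<close> Esm csm by blast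
  qed
  have "E (c i) a" "E (c i) b" "E (c i) d" using Xp ab sym by blast+
  moreover have "\<not> E r (c i)" "r \<noteq> c i" using Rp idx by blast+
  ultimately show False using no_k5e[OF G CC, of r "c i" a b d] Rp cV Xp ab rx clq by blast
qed

end
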